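(* In the setting below, assume each $f_i$ is $L_i$-smooth and $\eta_k\le\frac1{2n\sqrt{\bar LL^*}}$ for all $k\in[K]$. Then for any permutations $\sigma_1,\dots,\sigma_K$ and every $k\in[K]$, $$F(x_{k+1})-F(x_* )\le\frac{\|x_*-x_1\|^2}{2n\sum_{\ell=1}^k\eta_\ell}+\sum_{\ell=1}^k\frac{4\eta_\ell^3R_\ell}{\sum_{s=\ell}^k\eta_s}+\sum_{\ell=2}^k\frac{8n^2\bar L^2\eta_{\ell-1}\left(\sum_{s=\ell}^k\eta_s^3\right)}{\left(\sum_{s=\ell}^k\eta_s\right)\left(\sum_{s=\ell-1}^k\eta_s\right)}B_f(x_\ell,x_* ),$$ where $R_\ell=\sum_{i=2}^n\frac{L_{\sigma_\ell^i}}{n}\Big\|\sum_{j=1}^{i-1}\nabla f_{\sigma_\ell^j}(x_* )\Big\|^2$.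
   Context: Setting. Let $n,d\in\mathbb N$, let $f_1,\dots,f_n:\mathbb R^d\to\mathbb R$ be convex, $f=\frac1n\sum_{i=1}^nf_i$, let $\psi:\mathbb R^d\to\mathbb R\cup\{+\infty\}$ be proper, closed and convex, and $F=f+\psi$. $B_g(x,y)=g(x)-g(y)-\langle\nabla g(y),x-y\rangle$ is the Bregman divergence. Assume there is $x_*\in\mathbb R^d$ with $F(x_* )=\inf_{x}F(x)\in\mathbb R$. Proximal shuffling gradient method: given $x_1\in\mathrm{dom}\,\psi$, a number of epochs $K\ge2$ and stepsizes $\eta_k>0$, for $k=1,\dots,K$: choose a permutation $\sigma_k=(\sigma_k^1,\dots,\sigma_k^n)$ of $[n]=\{1,\dots,n\}$; set $x_k^1=x_k$ and $x_k^{i+1}=x_k^i-\eta_k\nabla f_{\sigma_k^i}(x_k^i)$ for $i=1,\dots,n$; set $x_{k+1}=\arg\min_{x\in\mathbb R^d}\{n\psi(x)+\frac{1}{2\eta_k}\|x-x_k^{n+1}\|^2\}$. Smoothness: each $f_i$ is differentiable with $\|\nabla f_i(x)-\nabla f_i(y)\|\le L_i\|x-y\|$ for all $x,y$, $L_i>0$; $\bar L=\frac1n\sum_iL_i$, $L^*=\max_iL_i$. *)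

theory Defs
  imports "HOL-Analysis.Analysis"
begin

definition proper_fun :: "('a \<Rightarrow> ereal) \<Rightarrow> bool" where
  "proper_fun \<psi> \<longleftrightarrow> (\<forall>x. \<psi> x \<noteq> -\<infinity>) \<and> (\<exists>x. \<psi> x < \<infinity>)"

definition ereal_convex :: "('a::real_vector \<Rightarrow> ereal) \<Rightarrow> bool" where
  "ereal_convex \<psi> \<longleftrightarrow> (\<forall>x y (t::real). 0 \<le> t \<and> t \<le> 1 \<longrightarrow>
      \<psi> (t *\<^sub>R x + (1 - t) *\<^sub>R y) \<le> ereal t * \<psi> x + ereal (1 - t) * \<psi> y)"

definition closed_fun :: "('a::topological_space \<Rightarrow> ereal) \<Rightarrow> bool" where
  "closed_fun \<psi> \<longleftrightarrow> closed {(x, t::real). \<psi> x \<le> ereal t}"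

definition avg_fun :: "nat \<Rightarrow> (nat \<Rightarrow> 'a \<Rightarrow> real) \<Rightarrow> 'a \<Rightarrow> real" where
  "avg_fun n f x = (1 / real n) * (\<Sum>i=1..n. f i x)"

definition avg_grad :: "nat \<Rightarrow> (nat \<Rightarrow> 'a \<Rightarrow> 'a::real_vector) \<Rightarrow> 'a \<Rightarrow> 'a" where
  "avg_grad n g x = (1 / real n) *\<^sub>R (\<Sum>i=1..n. g i x)"

definition bregman :: "('a \<Rightarrow> real) \<Rightarrow> ('a \<Rightarrow> 'a::real_inner) \<Rightarrow> 'a \<Rightarrow> 'a \<Rightarrow> real" where
  "bregman f gf x y = f x - f y - inner (gf y) (x - y)"

text \<open>Inner pass of epoch: shuffle_pass eta s g x0 i = x_k^{i+1}, with
  x_k^1 = x0 and x_k^{i+1} = x_k^i - eta * grad f_{s i}(x_k^i).\<close>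
fun shuffle_pass :: "real \<Rightarrow> (nat \<Rightarrow> nat) \<Rightarrow> (nat \<Rightarrow> 'a \<Rightarrow> 'a::real_vector) \<Rightarrow> 'a \<Rightarrow> nat \<Rightarrow> 'a" where
  "shuffle_pass eta s g x0 0 = x0"
| "shuffle_pass eta s g x0 (Suc i) =
     shuffle_pass eta s g x0 i - eta *\<^sub>R g (s (Suc i)) (shuffle_pass eta s g x0 i)"

definition is_prox_point :: "nat \<Rightarrow> ('a \<Rightarrow> ereal) \<Rightarrow> real \<Rightarrow> 'a::real_normed_vector \<Rightarrow> 'a \<Rightarrow> bool" where
  "is_prox_point n \<psi> eta y z \<longleftrightarrow>
     (\<forall>w. ereal (real n) * \<psi> z + ereal ((norm (z - y))\<^sup>2 / (2 * eta))
          \<le> ereal (real n) * \<psi> w + ereal ((norm (w - y))\<^sup>2 / (2 * eta)))"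

end

theory Submission
  imports Defs
begin


lemma descent:
  fixes h :: "'a::real_inner \<Rightarrow> real"
  assumes deriv: "\<And>y. (h has_derivative (\<lambda>v. inner (gh y) v)) (at y)"
  and lip: "\<And>y z. norm (gh y - gh z) \<le> L * norm (y - z)"
  shows "h u \<le> h v + inner (gh v) (u - v) + L/2 * (norm (u-v))^2"
proof -
  define d where "d = u - v"
  define \<phi> where "\<phi> t = h (v + t *\<^sub>R d) - t * inner (gh v) d - L/2 * t^2 * (norm d)^2" for t
  have D: "DERIV \<phi> t :> inner (gh (v + t *\<^sub>R d)) d - inner (gh v) d - L * t * (norm d)^2" for t
  proof -
    have l: "((\<lambda>t. v + t *\<^sub>R d) has_derivative (\<lambda>s. s *\<^sub>R d)) (at t)"
      by (auto intro!: derivative_eq_intros)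
    have c: "((\<lambda>t. h (v + t *\<^sub>R d)) has_derivative (\<lambda>s. inner (gh (v + t *\<^sub>R d)) (s *\<^sub>R d))) (at t)"
      using diff_chain_at[OF l deriv[of "v + t *\<^sub>R d"]] by (simp add: o_def)
    have c2: "((\<lambda>t. h (v + t *\<^sub>R d)) has_real_derivative inner (gh (v + t *\<^sub>R d)) d) (at t)"
      unfolding has_field_derivative_def by (rule has_derivative_eq_rhs[OF c]) (auto simp: fun_eq_iff)
    show ?thesis unfolding \<phi>_def
      by (rule derivative_eq_intros c2 | simp)+ (simp add: power2_eq_square algebra_simps)?
  qed
  have nonpos: "inner (gh (v + t *\<^sub>R d)) d - inner (gh v) d - L * t * (norm d)^2 \<le> 0" if "0 \<le> t" for t
  proof -
    have "inner (gh (v + t *\<^sub>R d)) d - inner (gh v) d = inner (gh (v + t *\<^sub>R d) - gh v) d"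
      by (simp add: inner_diff_left)
    also have "\<dots> \<le> norm (gh (v + t *\<^sub>R d) - gh v) * norm d" by (rule norm_cauchy_schwarz)
    also have "\<dots> \<le> L * norm (t *\<^sub>R d) * norm d"
      using lip[of "v + t *\<^sub>R d" v] by (intro mult_right_mono) auto
    also have "\<dots> = L * t * (norm d)^2" using that by (simp add: power2_eq_square)
    finally show ?thesis by simp
  qed
  have "\<phi> 1 \<le> \<phi> 0"
    by (rule DERIV_nonpos_imp_nonincreasing[of 0 1]) (simp, rule exI, rule conjI, rule D, rule nonpos, simp)
  thus ?thesis unfolding \<phi>_def d_def by simp
qed

lemma above_tangent:
  fixes h :: "'a::real_inner \<Rightarrow> real"
  assumes cvx: "convex_on UNIV h" and der: "(h has_derivative (\<lambda>v. inner G v)) (at v0)"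
  shows "h v0 + inner G (u - v0) \<le> h u"
proof -
  define d where "d = u - v0"
  define \<phi> where "\<phi> t = h (v0 + t *\<^sub>R d)" for t
  have cphi: "convex_on UNIV \<phi>"
  proof (rule convex_onI)
    fix t x y :: real assume t: "0 < t" "t < 1"
    have "v0 + ((1 - t) *\<^sub>R x + t *\<^sub>R y) *\<^sub>R d = (1 - t) *\<^sub>R (v0 + x *\<^sub>R d) + t *\<^sub>R (v0 + y *\<^sub>R d)"
      by (simp add: algebra_simps)
    then show "\<phi> ((1 - t) *\<^sub>R x + t *\<^sub>R y) \<le> (1 - t) * \<phi> x + t * \<phi> y"
      unfolding \<phi>_def using convex_onD[OF cvx, of t "v0 + x *\<^sub>R d" "v0 + y *\<^sub>R d"] t by simp
  qed simp
  have l: "((\<lambda>t. v0 + t *\<^sub>R d) has_derivative (\<lambda>s. s *\<^sub>R d)) (at 0)"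
    by (auto intro!: derivative_eq_intros)
  have der': "(h has_derivative (\<lambda>v. inner G v)) (at (v0 + 0 *\<^sub>R d))" using der by simp
  have c: "(\<phi> has_derivative ((\<lambda>v. inner G v) \<circ> (\<lambda>s. s *\<^sub>R d))) (at 0)"
    using diff_chain_at[OF l der'] unfolding \<phi>_def o_def .
  have c2: "(\<phi> has_real_derivative inner G d) (at 0 within UNIV)"
    unfolding has_field_derivative_def by (rule has_derivative_eq_rhs[OF c]) (auto simp: fun_eq_iff)
  have "\<phi> 1 - \<phi> 0 \<ge> inner G d * (1 - 0)"
    by (rule convex_on_imp_above_tangent[OF cphi _ _ _ c2]) auto
  thus ?thesis unfolding \<phi>_def d_def by simp
qed

lemma cocoercive:
  fixes h :: "'a::real_inner \<Rightarrow> real"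
  assumes cvx: "convex_on UNIV h"
  and deriv: "\<And>y. (h has_derivative (\<lambda>v. inner (gh y) v)) (at y)"
  and lip: "\<And>y z. norm (gh y - gh z) \<le> L * norm (y - z)"
  and L: "L > 0"
  shows "h y + inner (gh y) (z - y) + (norm (gh z - gh y))^2 / (2*L) \<le> h z"
proof -
  define \<delta> where "\<delta> = gh z - gh y"
  define w where "w = z - (1/L) *\<^sub>R \<delta>"
  have 1: "h y + inner (gh y) (w - y) \<le> h w" by (rule above_tangent[OF cvx deriv])
  have 2: "h w \<le> h z + inner (gh z) (w - z) + L/2 * (norm (w - z))^2" by (rule descent[OF deriv lip])
  have e1: "inner (gh y) (w - y) = inner (gh y) (z - y) - (1/L) * inner (gh y) \<delta>"
    unfolding w_def by (simp add: inner_diff_right algebra_simps)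
  have e2: "inner (gh z) (w - z) = - (1/L) * inner (gh z) \<delta>"
    unfolding w_def by (simp add: inner_diff_right algebra_simps)
  have e3: "L/2 * (norm (w - z))^2 = (norm \<delta>)^2 / (2*L)"
    unfolding w_def using L by (simp add: power2_eq_square field_simps)
  have e4: "inner (gh z) \<delta> - inner (gh y) \<delta> = (norm \<delta>)^2"
    unfolding power2_norm_eq_inner by (simp add: \<delta>_def inner_diff_left[symmetric])
  have "h y + inner (gh y) (z - y) \<le> h z - (1/L) * (inner (gh z) \<delta> - inner (gh y) \<delta>) + (norm \<delta>)^2 / (2*L)"
    using 1 2 e1 e2 e3 by (simp add: algebra_simps)
  also have "\<dots> = h z - (norm \<delta>)^2 / (2*L)" using L e4 by (simp add: field_simps)
  finally show ?thesis unfolding \<delta>_def by simp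
qed



lemma wcs:
  fixes v :: "nat \<Rightarrow> 'a::real_normed_vector"
  assumes w: "\<And>j. j\<in>A \<Longrightarrow> w j > 0"
  shows "(norm (\<Sum>j\<in>A. v j))^2 \<le> (\<Sum>j\<in>A. w j) * (\<Sum>j\<in>A. (norm (v j))^2 / w j)"
proof -
  have "norm (\<Sum>j\<in>A. v j) \<le> (\<Sum>j\<in>A. norm (v j))" by (rule norm_sum)
  also have "\<dots> = (\<Sum>j\<in>A. sqrt (w j) * (norm (v j) / sqrt (w j)))"
    by (rule sum.cong) (use w in force)+
  finally have 1: "(norm (\<Sum>j\<in>A. v j))^2 \<le> (\<Sum>j\<in>A. sqrt (w j) * (norm (v j) / sqrt (w j)))^2"
    by (rule power_mono) simp
  also have "\<dots> \<le> (\<Sum>j\<in>A. (sqrt (w j))^2) * (\<Sum>j\<in>A. (norm (v j) / sqrt (w j))^2)"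
    by (rule Cauchy_Schwarz_ineq_sum)
  also have "\<dots> = (\<Sum>j\<in>A. w j) * (\<Sum>j\<in>A. (norm (v j))^2 / w j)"
    using w by (intro arg_cong2[where f="(*)"] sum.cong) (auto simp: power_divide less_imp_le)
  finally show ?thesis .
qed

lemma limit_le:
  fixes a b c :: real
  assumes "\<And>\<theta>. 0 < \<theta> \<Longrightarrow> \<theta> \<le> 1 \<Longrightarrow> a \<le> b + \<theta> * c" and "c \<ge> 0"
  shows "a \<le> b"
proof (rule ccontr)
  assume "\<not> a \<le> b"
  define \<theta> where "\<theta> = min 1 ((a - b) / (c + 1))"
  have t: "0 < \<theta>" "\<theta> \<le> 1" using \<open>\<not> a \<le> b\<close> assms(2) by (auto simp: \<theta>_def)
  have "\<theta> * c \<le> (a - b) / (c + 1) * c" using assms(2) by (intro mult_right_mono) (auto simp: \<theta>_def)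
  also have "\<dots> < a - b" using \<open>\<not> a \<le> b\<close> assms(2) by (simp add: field_simps)
  finally show False using assms(1)[OF t] by simp
qed

lemma prox_fin:
  assumes prox: "is_prox_point n \<psi> \<eta> y z" and n: "n \<ge> 1" and w: "\<psi> w < \<infinity>"
    and nm: "\<And>x. \<psi> x \<noteq> -\<infinity>"
  shows "\<psi> z < \<infinity>"
proof (rule ccontr)
  assume "\<not> \<psi> z < \<infinity>"
  hence z: "\<psi> z = \<infinity>" by simp
  from w nm[of w] obtain r where r: "\<psi> w = ereal r" by (cases "\<psi> w") auto
  have "ereal (real n) * \<psi> z + ereal ((norm (z - y))\<^sup>2 / (2 * \<eta>))
          \<le> ereal (real n) * \<psi> w + ereal ((norm (w - y))\<^sup>2 / (2 * \<eta>))"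
    using prox unfolding is_prox_point_def by blast
  thus False using z r n by simp
qed

lemma prox_ineq:
  assumes prox: "is_prox_point n \<psi> \<eta> y z" and n: "n \<ge> 1" and eta: "\<eta> > 0"
    and cvx: "ereal_convex \<psi>" and w: "\<psi> w < \<infinity>"
    and nm: "\<And>x. \<psi> x \<noteq> -\<infinity>"
  shows "real n * \<eta> * (real_of_ereal (\<psi> z) - real_of_ereal (\<psi> w)) \<le> inner (y - z) (z - w)"
proof -
  have zf: "\<psi> z < \<infinity>" by (rule prox_fin[OF prox n w nm])
  obtain pz where pz: "\<psi> z = ereal pz" using zf nm[of z] by (cases "\<psi> z") auto
  obtain pw where pw: "\<psi> w = ereal pw" using w nm[of w] by (cases "\<psi> w") auto
  have key: "real n * (pz - pw) \<le> inner (z - y) (w - z) / \<eta> + \<theta> * ((norm (w - z))^2 / (2 * \<eta>))"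
    if t: "0 < \<theta>" "\<theta> \<le> 1" for \<theta>
  proof -
    define w' where "w' = \<theta> *\<^sub>R w + (1 - \<theta>) *\<^sub>R z"
    have cv: "\<psi> w' \<le> ereal \<theta> * \<psi> w + ereal (1 - \<theta>) * \<psi> z"
      using cvx t unfolding ereal_convex_def w'_def by auto
    hence cv': "\<psi> w' \<le> ereal (\<theta> * pw + (1 - \<theta>) * pz)" using pz pw by simp
    then obtain pw' where pw': "\<psi> w' = ereal pw'" "pw' \<le> \<theta> * pw + (1 - \<theta>) * pz"
      using nm[of w'] by (cases "\<psi> w'") auto
    have "ereal (real n) * \<psi> z + ereal ((norm (z - y))\<^sup>2 / (2 * \<eta>))
          \<le> ereal (real n) * \<psi> w' + ereal ((norm (w' - y))\<^sup>2 / (2 * \<eta>))"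
      using prox unfolding is_prox_point_def by blast
    hence 1: "real n * pz + (norm (z - y))\<^sup>2 / (2 * \<eta>) \<le> real n * pw' + (norm (w' - y))\<^sup>2 / (2 * \<eta>)"
      using pz pw' by simp
    have e: "w' - y = (z - y) + \<theta> *\<^sub>R (w - z)" unfolding w'_def by (simp add: algebra_simps)
    have e2: "(norm (w' - y))\<^sup>2 = (norm (z - y))\<^sup>2 + 2 * \<theta> * inner (z - y) (w - z) + \<theta>^2 * (norm (w - z))^2"
      unfolding e power2_norm_eq_inner by (simp add: inner_add_left inner_add_right algebra_simps power2_eq_square inner_commute)
    have "real n * pz \<le> real n * (\<theta> * pw + (1 - \<theta>) * pz) + (2 * \<theta> * inner (z - y) (w - z) + \<theta>^2 * (norm (w - z))^2) / (2 * \<eta>)"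
      using 1 e2 pw'(2) n by (smt (verit, ccfv_SIG) add_divide_distrib mult_left_mono of_nat_0_le_iff)
    hence "\<theta> * (real n * (pz - pw)) \<le> \<theta> * (inner (z - y) (w - z) / \<eta> + \<theta> * ((norm (w - z))^2 / (2 * \<eta>)))"
      using eta by (simp add: field_simps power2_eq_square)
    thus ?thesis using t by simp
  qed
  have "real n * (pz - pw) \<le> inner (z - y) (w - z) / \<eta>"
    by (rule limit_le[OF key]) (use eta in auto)
  hence "real n * \<eta> * (pz - pw) \<le> inner (z - y) (w - z)"
    using eta by (simp add: field_simps)
  moreover have "inner (z - y) (w - z) = inner (y - z) (z - w)"
    by (simp add: inner_diff_left inner_diff_right algebra_simps)
  ultimately show ?thesis using pz pw by simp
qed



lemma sq_add_le: "(norm (u + v :: 'a::real_inner))^2 \<le> 2 * (norm u)^2 + 2 * (norm v)^2"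
proof -
  have "(norm (u + v))^2 + (norm (u - v))^2 = 2 * (norm u)^2 + 2 * (norm v)^2"
    unfolding power2_norm_eq_inner by (simp add: inner_add_left inner_add_right inner_diff_left inner_diff_right inner_commute)
  thus ?thesis by (smt (verit) zero_le_power2)
qed

lemma sq_add3_le: "(norm (a + b + c :: 'a::real_inner))^2 \<le> 4 * (norm a)^2 + 4 * (norm b)^2 + 2 * (norm c)^2"
proof -
  have "(norm (a + b + c))^2 \<le> 2 * (norm (a + b))^2 + 2 * (norm c)^2" by (rule sq_add_le)
  moreover have "(norm (a + b))^2 \<le> 2 * (norm a)^2 + 2 * (norm b)^2" by (rule sq_add_le)
  ultimately show ?thesis by simp
qed

lemma partial_wcs:
  fixes v :: "nat \<Rightarrow> 'a::real_normed_vector"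
  assumes w: "\<And>j. j \<in> {1..n} \<Longrightarrow> w j > 0" and i: "i \<in> {1..n}"
  shows "(norm (\<Sum>j=1..i-1. v j))^2 \<le> (\<Sum>j=1..n. w j) * (\<Sum>j=1..n. (norm (v j))^2 / w j)"
proof -
  have sub: "{1..i-1} \<subseteq> {1..n}" using i by auto
  have "(norm (\<Sum>j=1..i-1. v j))^2 \<le> (\<Sum>j=1..i-1. w j) * (\<Sum>j=1..i-1. (norm (v j))^2 / w j)"
    by (rule wcs) (use w sub in auto)
  also have "\<dots> \<le> (\<Sum>j=1..n. w j) * (\<Sum>j=1..n. (norm (v j))^2 / w j)"
  proof -
    have wnn: "\<And>j. j\<in>{1..n} \<Longrightarrow> 0 \<le> w j" using w less_imp_le by blast
    have qnn: "\<And>j. j\<in>{1..n} \<Longrightarrow> 0 \<le> (norm (v j))^2 / w j" using wnn by simp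
    have s1: "(\<Sum>j=1..i-1. w j) \<le> (\<Sum>j=1..n. w j)"
      by (rule sum_mono2[OF _ sub]) (use wnn in auto)
    have s2: "(\<Sum>j=1..i-1. (norm (v j))^2 / w j) \<le> (\<Sum>j=1..n. (norm (v j))^2 / w j)"
      by (rule sum_mono2[OF _ sub]) (use qnn in auto)
    have s3: "0 \<le> (\<Sum>j=1..i-1. (norm (v j))^2 / w j)" using qnn sub by (intro sum_nonneg) auto
    have s4: "0 \<le> (\<Sum>j=1..n. w j)" using wnn by (intro sum_nonneg) auto
    show ?thesis by (rule mult_mono[OF s1 s2 s4 s3])
  qed
  finally show ?thesis .
qed

lemma err_bound:
  fixes a b c P :: "nat \<Rightarrow> 'a::real_inner"
  assumes Lw: "\<And>i. i \<in> {1..n} \<Longrightarrow> Lw i > 0"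
    and P: "\<And>i. i \<in> {1..n} \<Longrightarrow> P i = d + \<eta> *\<^sub>R (\<Sum>j=1..i-1. a j + b j + c j)"
    and SL: "SL = (\<Sum>i=1..n. Lw i)"
    and eta: "\<eta> > 0" and step: "2 * \<eta> * SL \<le> 1"
    and bB: "(\<Sum>j=1..n. (norm (b j))^2 / Lw j) \<le> 2 * real n * Bz"
  shows "\<eta> * (\<Sum>i=1..n. Lw i * (norm (P i))^2) - \<eta> * (\<Sum>i=1..n. (norm (c i))^2 / Lw i) - (norm d)^2
    \<le> 8 * \<eta>^3 * (\<Sum>i=1..n. Lw i * (norm (\<Sum>j=1..i-1. a j))^2) + 16 * \<eta>^3 * SL^2 * real n * Bz"
proof -
  define Cs where "Cs = (\<Sum>j=1..n. (norm (c j))^2 / Lw j)"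
  have Lnn: "\<And>j. j\<in>{1..n} \<Longrightarrow> 0 \<le> Lw j" using Lw less_imp_le by blast
  have SLpos: "SL \<ge> 0" unfolding SL using Lnn by (intro sum_nonneg) auto
  have Cspos: "Cs \<ge> 0" unfolding Cs_def using Lnn by (intro sum_nonneg) auto
  have each: "(norm (P i))^2 \<le> 2 * (norm d)^2 + 2 * \<eta>^2 * (4 * (norm (\<Sum>j=1..i-1. a j))^2 + 4 * (SL * (2 * real n * Bz)) + 2 * (SL * Cs))"
    if i: "i \<in> {1..n}" for i
  proof -
    have "(norm (P i))^2 \<le> 2 * (norm d)^2 + 2 * (norm (\<eta> *\<^sub>R (\<Sum>j=1..i-1. a j + b j + c j)))^2"
      unfolding P[OF i] by (rule sq_add_le)
    also have "(norm (\<eta> *\<^sub>R (\<Sum>j=1..i-1. a j + b j + c j)))^2 = \<eta>^2 * (norm ((\<Sum>j=1..i-1. a j) + (\<Sum>j=1..i-1. b j) + (\<Sum>j=1..i-1. c j)))^2"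
      using eta by (simp add: sum.distrib power_mult_distrib)
    also have "(norm ((\<Sum>j=1..i-1. a j) + (\<Sum>j=1..i-1. b j) + (\<Sum>j=1..i-1. c j)))^2
       \<le> 4 * (norm (\<Sum>j=1..i-1. a j))^2 + 4 * (norm (\<Sum>j=1..i-1. b j))^2 + 2 * (norm (\<Sum>j=1..i-1. c j))^2"
      by (rule sq_add3_le)
    also have "(norm (\<Sum>j=1..i-1. b j))^2 \<le> SL * (2 * real n * Bz)"
      using partial_wcs[OF Lw i, where v=b] bB SLpos unfolding SL by (meson mult_left_mono order_trans)
    also have "(norm (\<Sum>j=1..i-1. c j))^2 \<le> SL * Cs"
      using partial_wcs[OF Lw i, where v=c] unfolding SL Cs_def .
    finally show ?thesis by (simp add: mult_left_mono)
  qed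
  define D where "D = (norm d)^2"
  define K where "K = SL * (2 * real n * Bz)"
  define M where "M = SL * Cs"
  define T where "T i = Lw i * (norm (\<Sum>j=1..i-1. a j))^2" for i
  define C where "C = 2 * D + 8 * \<eta>^2 * K + 4 * \<eta>^2 * M"
  have "(\<Sum>i=1..n. Lw i * (norm (P i))^2) \<le> (\<Sum>i=1..n. Lw i * (2 * (norm d)^2 + 2 * \<eta>^2 * (4 * (norm (\<Sum>j=1..i-1. a j))^2 + 4 * (SL * (2 * real n * Bz)) + 2 * (SL * Cs))))"
    by (rule sum_mono, rule mult_left_mono[OF each]) (use Lnn in auto)
  also have "\<dots> = (\<Sum>i=1..n. C * Lw i + 8 * \<eta>^2 * T i)"
    by (rule sum.cong) (simp_all add: C_def D_def K_def M_def T_def algebra_simps)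
  also have "\<dots> = C * SL + 8 * \<eta>^2 * (\<Sum>i=1..n. T i)"
    unfolding SL by (simp add: sum.distrib sum_distrib_left)
  finally have 1: "(\<Sum>i=1..n. Lw i * (norm (P i))^2) \<le> C * SL + 8 * \<eta>^2 * (\<Sum>i=1..n. T i)" .
  have 2: "\<eta> * (2 * SL * D) \<le> D"
  proof -
    have "\<eta> * (2 * SL * D) = (2 * \<eta> * SL) * D" by simp
    also have "\<dots> \<le> D" by (rule mult_left_le_one_le) (use step eta SLpos in \<open>auto simp: D_def\<close>)
    finally show ?thesis .
  qed
  have 3: "\<eta> * (4 * \<eta>^2 * SL^2 * Cs) \<le> \<eta> * Cs"
  proof -
    have "4 * \<eta>^2 * SL^2 = (2 * \<eta> * SL)^2" by (simp add: power_mult_distrib)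
    also have "\<dots> \<le> 1" using step eta SLpos by (simp add: power_le_one)
    finally have "4 * \<eta>^2 * SL^2 * Cs \<le> Cs" using Cspos by (simp add: mult_left_le_one_le)
    thus ?thesis using eta by (simp add: mult_left_mono)
  qed
  have 4: "\<eta> * (\<Sum>i=1..n. Lw i * (norm (P i))^2) \<le> \<eta> * (C * SL + 8 * \<eta>^2 * (\<Sum>i=1..n. T i))"
    using 1 eta by (simp add: mult_left_mono)
  have 5: "\<eta> * (C * SL + 8 * \<eta>^2 * (\<Sum>i=1..n. T i)) = \<eta> * (2 * SL * D) + 8 * \<eta>^3 * (\<Sum>i=1..n. T i)
     + 16 * \<eta>^3 * SL^2 * real n * Bz + \<eta> * (4 * \<eta>^2 * SL^2 * Cs)"
    unfolding C_def K_def M_def by (simp add: algebra_simps power2_eq_square power3_eq_cube)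
  have 6: "(\<Sum>i=1..n. Lw i * (norm (\<Sum>j=1..i-1. a j))^2) = (\<Sum>i=1..n. T i)" unfolding T_def ..
  show ?thesis unfolding 6 Cs_def[symmetric] D_def[symmetric] using 2 3 4 5 by linarith
qed



lemma shuffle_closed:
  "shuffle_pass \<eta> s g x k = x - \<eta> *\<^sub>R (\<Sum>i=1..k. g (s i) (shuffle_pass \<eta> s g x (i-1)))"
  by (induction k) (auto simp: algebra_simps)

lemma epoch:
  fixes n :: nat and f :: "nat \<Rightarrow> 'a::real_inner \<Rightarrow> real" and g :: "nat \<Rightarrow> 'a \<Rightarrow> 'a"
  assumes n: "n \<ge> 1"
    and f_convex: "\<And>i. i \<in> {1..n} \<Longrightarrow> convex_on UNIV (f i)"
    and f_grad: "\<And>i y. i \<in> {1..n} \<Longrightarrow> (f i has_derivative (\<lambda>h. inner (g i y) h)) (at y)"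
    and L_pos: "\<And>i. i \<in> {1..n} \<Longrightarrow> L i > 0"
    and f_smooth: "\<And>i y z. i \<in> {1..n} \<Longrightarrow> norm (g i y - g i z) \<le> L i * norm (y - z)"
    and s: "bij_betw s {1..n} {1..n}"
    and eta: "\<eta> > 0" and step: "2 * \<eta> * (\<Sum>i=1..n. L i) \<le> 1"
    and cvx: "ereal_convex \<psi>" and nm: "\<And>x. \<psi> x \<noteq> -\<infinity>"
    and prox: "is_prox_point n \<psi> \<eta> (shuffle_pass \<eta> s g x n) xp"
    and zf: "\<psi> z < \<infinity>"
  shows "(norm (xp - z))^2 \<le> (norm (x - z))^2
     - 2 * real n * \<eta> * ((avg_fun n f xp + real_of_ereal (\<psi> xp)) - (avg_fun n f z + real_of_ereal (\<psi> z)))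
     + 8 * \<eta>^3 * (\<Sum>i=1..n. L (s i) * (norm (\<Sum>j=1..i-1. g (s j) xs))^2)
     + 16 * \<eta>^3 * (\<Sum>i=1..n. L i)^2 * real n * bregman (avg_fun n f) (avg_grad n g) z xs"
proof -
  define Y where "Y k = shuffle_pass \<eta> s g x k" for k
  define G where "G i = g (s i) (Y (i-1))" for i
  have si: "s i \<in> {1..n}" if "i \<in> {1..n}" for i using s that by (auto simp: bij_betw_def)
  have Yc: "Y k = x - \<eta> *\<^sub>R (\<Sum>i=1..k. G i)" for k
    unfolding Y_def G_def by (rule shuffle_closed)
  define p where "p v = real_of_ereal (\<psi> v)" for v
  have A: "real n * \<eta> * (p xp - p z) \<le> inner (Y n - xp) (xp - z)"
    unfolding p_def Y_def by (rule prox_ineq[OF prox n eta cvx zf nm])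
  have C: "inner (G i) (xp - z) \<ge> f (s i) xp - f (s i) z - L (s i) / 2 * (norm (xp - Y (i-1)))^2
      + (norm (G i - g (s i) z))^2 / (2 * L (s i))" if i: "i \<in> {1..n}" for i
  proof -
    have 1: "f (s i) xp \<le> f (s i) (Y (i-1)) + inner (G i) (xp - Y (i-1)) + L (s i) / 2 * (norm (xp - Y (i-1)))^2"
      unfolding G_def by (rule descent[OF f_grad f_smooth]) (use si[OF i] in auto)
    have 2: "f (s i) (Y (i-1)) + inner (G i) (z - Y (i-1)) + (norm (g (s i) z - G i))^2 / (2 * L (s i)) \<le> f (s i) z"
      unfolding G_def by (rule cocoercive[OF f_convex f_grad f_smooth L_pos]) (use si[OF i] in auto)
    have 3: "inner (G i) (xp - z) = inner (G i) (xp - Y (i-1)) - inner (G i) (z - Y (i-1))"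
      by (simp add: inner_diff_right)
    have 4: "norm (g (s i) z - G i) = norm (G i - g (s i) z)" by (rule norm_minus_commute)
    show ?thesis using 1 2 3 4 by simp
  qed
  have sumC: "inner (\<Sum>i=1..n. G i) (xp - z) \<ge> (\<Sum>i=1..n. f (s i) xp) - (\<Sum>i=1..n. f (s i) z)
      - (\<Sum>i=1..n. L (s i) / 2 * (norm (xp - Y (i-1)))^2) + (\<Sum>i=1..n. (norm (G i - g (s i) z))^2 / (2 * L (s i)))"
  proof -
    have "inner (\<Sum>i=1..n. G i) (xp - z) = (\<Sum>i=1..n. inner (G i) (xp - z))" by (simp add: inner_sum_left)
    also have "\<dots> \<ge> (\<Sum>i=1..n. f (s i) xp - f (s i) z - L (s i) / 2 * (norm (xp - Y (i-1)))^2
      + (norm (G i - g (s i) z))^2 / (2 * L (s i)))" by (rule sum_mono) (rule C, simp)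
    finally show ?thesis by (simp add: sum.distrib sum_subtractf)
  qed
  have reidx: "(\<Sum>i=1..n. h (s i)) = (\<Sum>i=1..n. h i)" for h :: "nat \<Rightarrow> real"
    by (rule sum.reindex_bij_betw[OF s])
  have fsum: "(\<Sum>i=1..n. f i v) = real n * avg_fun n f v" for v
    unfolding avg_fun_def using n by simp
  have B: "(norm (xp - z))^2 = (norm (x - z))^2 - 2 * inner (x - xp) (xp - z) - (norm (x - xp))^2"
  proof -
    have "x - z = (x - xp) + (xp - z)" by simp
    hence "(norm (x - z))^2 = (norm (x - xp))^2 + 2 * inner (x - xp) (xp - z) + (norm (xp - z))^2"
      by (metis power2_norm_eq_inner inner_add_left inner_add_right inner_commute mult_2 add.assoc)
    thus ?thesis by simp
  qed
  have xx: "x - xp = (Y n - xp) + \<eta> *\<^sub>R (\<Sum>i=1..n. G i)" by (simp add: Yc)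
  have inner_split: "inner (x - xp) (xp - z) = inner (Y n - xp) (xp - z) + \<eta> * inner (\<Sum>i=1..n. G i) (xp - z)"
    unfolding xx by (simp add: inner_add_left)
  define Q1 where "Q1 = (\<Sum>i=1..n. L (s i) * (norm (xp - Y (i-1)))^2)"
  define Q2 where "Q2 = (\<Sum>i=1..n. (norm (G i - g (s i) z))^2 / L (s i))"
  have sq1: "(\<Sum>i=1..n. L (s i) / 2 * (norm (xp - Y (i-1)))^2) = Q1 / 2"
    unfolding Q1_def by (simp add: sum_divide_distrib)
  have sq2: "(\<Sum>i=1..n. (norm (G i - g (s i) z))^2 / (2 * L (s i))) = Q2 / 2"
    unfolding Q2_def by (simp add: sum_divide_distrib mult.commute)
  have main: "(norm (xp - z))^2 \<le> (norm (x - z))^2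
      - 2 * real n * \<eta> * ((avg_fun n f xp + p xp) - (avg_fun n f z + p z))
      + \<eta> * Q1 - \<eta> * Q2 - (norm (x - xp))^2"
  proof -
    have "inner (\<Sum>i=1..n. G i) (xp - z) \<ge> real n * avg_fun n f xp - real n * avg_fun n f z - Q1 / 2 + Q2 / 2"
      using sumC unfolding sq1 sq2 reidx[of "\<lambda>i. f i xp"] reidx[of "\<lambda>i. f i z"] fsum .
    hence "\<eta> * inner (\<Sum>i=1..n. G i) (xp - z) \<ge> \<eta> * (real n * avg_fun n f xp - real n * avg_fun n f z - Q1 / 2 + Q2 / 2)"
      using eta by (simp add: mult_left_mono)
    thus ?thesis using A B inner_split by (simp add: algebra_simps)
  qed
  define SL where "SL = (\<Sum>i=1..n. L (s i))"
  have SLe: "SL = (\<Sum>i=1..n. L i)" unfolding SL_def by (rule reidx)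
  define Bz where "Bz = bregman (avg_fun n f) (avg_grad n g) z xs"
  have bB: "(\<Sum>j=1..n. (norm (g (s j) z - g (s j) xs))^2 / L (s j)) \<le> 2 * real n * Bz"
  proof -
    have "(\<Sum>j=1..n. (norm (g (s j) z - g (s j) xs))^2 / L (s j)) = (\<Sum>j=1..n. (norm (g j z - g j xs))^2 / L j)"
      by (rule reidx[of "\<lambda>j. (norm (g j z - g j xs))^2 / L j"])
    also have "\<dots> \<le> (\<Sum>j=1..n. 2 * (f j z - f j xs - inner (g j xs) (z - xs)))"
    proof (rule sum_mono)
      fix j assume j: "j \<in> {1..n}"
      have "f j xs + inner (g j xs) (z - xs) + (norm (g j z - g j xs))^2 / (2 * L j) \<le> f j z"
        by (rule cocoercive[OF f_convex f_grad f_smooth L_pos]) (use j in auto)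
      thus "(norm (g j z - g j xs))^2 / L j \<le> 2 * (f j z - f j xs - inner (g j xs) (z - xs))"
        using L_pos[OF j] by (simp add: field_simps)
    qed
    also have "\<dots> = 2 * ((\<Sum>j=1..n. f j z) - (\<Sum>j=1..n. f j xs) - inner (\<Sum>j=1..n. g j xs) (z - xs))"
      by (simp add: sum_subtractf sum_distrib_left inner_sum_left)
    also have "\<dots> = 2 * real n * Bz"
      unfolding Bz_def bregman_def avg_fun_def avg_grad_def using n
      by (simp add: inner_scaleR_left field_simps)
    finally show ?thesis .
  qed
  have EB: "\<eta> * Q1 - \<eta> * Q2 - (norm (xp - x))^2
    \<le> 8 * \<eta>^3 * (\<Sum>i=1..n. L (s i) * (norm (\<Sum>j=1..i-1. g (s j) xs))^2) + 16 * \<eta>^3 * SL^2 * real n * Bz"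
    unfolding Q1_def Q2_def
  proof (rule err_bound[where a="\<lambda>j. g (s j) xs" and b="\<lambda>j. g (s j) z - g (s j) xs" and c="\<lambda>j. G j - g (s j) z" and Lw="\<lambda>i. L (s i)"])
    show "\<And>i. i \<in> {1..n} \<Longrightarrow> L (s i) > 0" using L_pos si by blast
    show "\<And>i. i \<in> {1..n} \<Longrightarrow> xp - Y (i-1) = (xp - x) + \<eta> *\<^sub>R (\<Sum>j=1..i-1. g (s j) xs + (g (s j) z - g (s j) xs) + (G j - g (s j) z))"
      by (simp add: Yc)
    show "SL = (\<Sum>i=1..n. L (s i))" by (rule SL_def)
    show "\<eta> > 0" by (rule eta)
    show "2 * \<eta> * SL \<le> 1" using step SLe by simp
    show "(\<Sum>j=1..n. (norm (g (s j) z - g (s j) xs))^2 / L (s j)) \<le> 2 * real n * Bz" by (rule bB)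
  qed
  have nx: "(norm (x - xp)) = norm (xp - x)" by (rule norm_minus_commute)
  have EB2: "\<eta> * Q1 - \<eta> * Q2 - (norm (x - xp))^2
    \<le> 8 * \<eta>^3 * (\<Sum>i=1..n. L (s i) * (norm (\<Sum>j=1..i-1. g (s j) xs))^2)
      + 16 * \<eta>^3 * (\<Sum>i=1..n. L i)^2 * real n * bregman (avg_fun n f) (avg_grad n g) z xs"
    using EB by (simp only: nx SLe Bz_def)
  show ?thesis using main EB2 unfolding p_def by linarith
qed



lemma sum_exchange:
  fixes h :: "nat \<Rightarrow> nat \<Rightarrow> real"
  shows "(\<Sum>t=1..k. \<Sum>l=2..t. h t l) = (\<Sum>l=2..k. \<Sum>t=l..k. h t l)"
proof (induction k)
  case 0 then show ?case by simp
next
  case (Suc k)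
  have "(\<Sum>l=2..Suc k. \<Sum>t=l..Suc k. h t l) = (\<Sum>l=2..Suc k. (\<Sum>t=l..k. h t l) + h (Suc k) l)"
    by (rule sum.cong) (auto simp: sum.cl_ivl_Suc)
  also have "\<dots> = (\<Sum>l=2..Suc k. \<Sum>t=l..k. h t l) + (\<Sum>l=2..Suc k. h (Suc k) l)"
    by (simp add: sum.distrib)
  also have "(\<Sum>l=2..Suc k. \<Sum>t=l..k. h t l) = (\<Sum>l=2..k. \<Sum>t=l..k. h t l)"
    by (simp add: sum.cl_ivl_Suc)
  finally show ?case using Suc by (simp add: sum.cl_ivl_Suc)
qed

lemma comb_props:
  assumes cvx: "ereal_convex \<psi>" and nm: "\<And>x. \<psi> x \<noteq> -\<infinity>"
    and fa: "\<psi> a < \<infinity>" and fb: "\<psi> b < \<infinity>" and r: "0 \<le> r" "r \<le> 1"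
  shows "\<psi> (r *\<^sub>R a + (1-r) *\<^sub>R b) < \<infinity>"
    and "real_of_ereal (\<psi> (r *\<^sub>R a + (1-r) *\<^sub>R b)) \<le> r * real_of_ereal (\<psi> a) + (1-r) * real_of_ereal (\<psi> b)"
proof -
  obtain pa where pa: "\<psi> a = ereal pa" using fa nm[of a] by (cases "\<psi> a") auto
  obtain pb where pb: "\<psi> b = ereal pb" using fb nm[of b] by (cases "\<psi> b") auto
  have "\<psi> (r *\<^sub>R a + (1-r) *\<^sub>R b) \<le> ereal r * \<psi> a + ereal (1 - r) * \<psi> b"
    using cvx r unfolding ereal_convex_def by blast
  hence le: "\<psi> (r *\<^sub>R a + (1-r) *\<^sub>R b) \<le> ereal (r * pa + (1-r) * pb)" using pa pb by simp
  then obtain pc where pc: "\<psi> (r *\<^sub>R a + (1-r) *\<^sub>R b) = ereal pc" "pc \<le> r * pa + (1-r) * pb"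
    using nm[of "r *\<^sub>R a + (1-r) *\<^sub>R b"] by (cases "\<psi> (r *\<^sub>R a + (1-r) *\<^sub>R b)") auto
  show "\<psi> (r *\<^sub>R a + (1-r) *\<^sub>R b) < \<infinity>" using pc by simp
  show "real_of_ereal (\<psi> (r *\<^sub>R a + (1-r) *\<^sub>R b)) \<le> r * real_of_ereal (\<psi> a) + (1-r) * real_of_ereal (\<psi> b)"
    using pc pa pb by simp
qed

lemma avg_conv:
  assumes f_convex: "\<And>i. i \<in> {1..n} \<Longrightarrow> convex_on UNIV (f i)" and r: "0 \<le> r" "r \<le> 1"
  shows "avg_fun n f (r *\<^sub>R a + (1-r) *\<^sub>R b) \<le> r * avg_fun n f a + (1-r) * avg_fun n f b"
proof -
  have "(\<Sum>i=1..n. f i (r *\<^sub>R a + (1-r) *\<^sub>R b)) \<le> (\<Sum>i=1..n. r * f i a + (1-r) * f i b)"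
  proof (rule sum_mono)
    fix i assume "i \<in> {1..n}"
    thus "f i (r *\<^sub>R a + (1-r) *\<^sub>R b) \<le> r * f i a + (1-r) * f i b"
      using f_convex[of i] r unfolding convex_on_def by auto
  qed
  hence "(1 / real n) * (\<Sum>i=1..n. f i (r *\<^sub>R a + (1-r) *\<^sub>R b)) \<le> (1 / real n) * (\<Sum>i=1..n. r * f i a + (1-r) * f i b)"
    by (simp add: divide_right_mono)
  moreover have "(\<Sum>i=1..n. r * f i a + (1-r) * f i b) = r * (\<Sum>i=1..n. f i a) + (1-r) * (\<Sum>i=1..n. f i b)"
    by (simp add: sum.distrib sum_distrib_left)
  moreover have "(1 / real n) * (r * (\<Sum>i=1..n. f i a) + (1-r) * (\<Sum>i=1..n. f i b))
     = r * ((1 / real n) * (\<Sum>i=1..n. f i a)) + (1-r) * ((1 / real n) * (\<Sum>i=1..n. f i b))"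
    by algebra
  ultimately show ?thesis unfolding avg_fun_def by metis
qed

lemma breg_conv:
  assumes f_convex: "\<And>i. i \<in> {1..n} \<Longrightarrow> convex_on UNIV (f i)" and r: "0 \<le> r" "r \<le> 1"
  shows "bregman (avg_fun n f) G (r *\<^sub>R a + (1-r) *\<^sub>R b) y \<le> r * bregman (avg_fun n f) G a y + (1-r) * bregman (avg_fun n f) G b y"
proof -
  have "inner (G y) (r *\<^sub>R a + (1-r) *\<^sub>R b - y) = r * inner (G y) (a - y) + (1 - r) * inner (G y) (b - y)"
    by (simp add: inner_diff_right inner_add_right algebra_simps)
  thus ?thesis using avg_conv[OF f_convex r, where a=a and b=b] unfolding bregman_def by (simp add: algebra_simps)
qed

fun zseq :: "(nat \<Rightarrow> real) \<Rightarrow> (nat \<Rightarrow> real) \<Rightarrow> (nat \<Rightarrow> 'a::real_vector) \<Rightarrow> 'a \<Rightarrow> nat \<Rightarrow> 'a" where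
  "zseq S \<eta> x xs 0 = xs"
| "zseq S \<eta> x xs (Suc t) = (if t = 0 then xs else (S (Suc t) / S t) *\<^sub>R zseq S \<eta> x xs t + (\<eta> t / S t) *\<^sub>R x (Suc t))"



theorem mainTheorem9:
  fixes n K :: nat
    and f :: "nat \<Rightarrow> 'a::euclidean_space \<Rightarrow> real"
    and g :: "nat \<Rightarrow> 'a \<Rightarrow> 'a"
    and \<psi> :: "'a \<Rightarrow> ereal"
    and L :: "nat \<Rightarrow> real"
    and \<eta> :: "nat \<Rightarrow> real"
    and \<sigma> :: "nat \<Rightarrow> nat \<Rightarrow> nat"
    and x :: "nat \<Rightarrow> 'a"
    and xs :: 'a
  assumes n_pos: "n \<ge> 1"
    and K_ge: "K \<ge> 2"
    and f_convex: "\<And>i. i \<in> {1..n} \<Longrightarrow> convex_on UNIV (f i)"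
    and f_grad: "\<And>i y. i \<in> {1..n} \<Longrightarrow> (f i has_derivative (\<lambda>h. inner (g i y) h)) (at y)"
    and L_pos: "\<And>i. i \<in> {1..n} \<Longrightarrow> L i > 0"
    and f_smooth: "\<And>i y z. i \<in> {1..n} \<Longrightarrow> norm (g i y - g i z) \<le> L i * norm (y - z)"
    and psi_proper: "proper_fun \<psi>"
    and psi_convex: "ereal_convex \<psi>"
    and psi_closed: "closed_fun \<psi>"
    and xs_min: "\<And>y. ereal (avg_fun n f xs) + \<psi> xs \<le> ereal (avg_fun n f y) + \<psi> y"
    and xs_fin: "\<psi> xs < \<infinity>"
    and x1_dom: "\<psi> (x 1) < \<infinity>"
    and eta_pos: "\<And>k. k \<in> {1..K} \<Longrightarrow> \<eta> k > 0"
    and eta_le: "\<And>k. k \<in> {1..K} \<Longrightarrow>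
        \<eta> k \<le> 1 / (2 * real n * sqrt ((\<Sum>i=1..n. L i) / real n * Max (L ` {1..n})))"
    and perm: "\<And>k. k \<in> {1..K} \<Longrightarrow> bij_betw (\<sigma> k) {1..n} {1..n}"
    and step: "\<And>k. k \<in> {1..K} \<Longrightarrow>
        is_prox_point n \<psi> (\<eta> k) (shuffle_pass (\<eta> k) (\<sigma> k) g (x k) n) (x (Suc k))"
    and k_range: "k \<in> {1..K}"
  shows "ereal (avg_fun n f (x (Suc k))) + \<psi> (x (Suc k)) - (ereal (avg_fun n f xs) + \<psi> xs)
    \<le> ereal ((norm (xs - x 1))\<^sup>2 / (2 * real n * (\<Sum>l=1..k. \<eta> l))
      + (\<Sum>l=1..k. 4 * (\<eta> l)^3 *
            (\<Sum>i=2..n. L (\<sigma> l i) / real n * (norm (\<Sum>j=1..i-1. g (\<sigma> l j) xs))\<^sup>2)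
            / (\<Sum>s=l..k. \<eta> s))
      + (\<Sum>l=2..k. 8 * (real n)\<^sup>2 * ((\<Sum>i=1..n. L i) / real n)\<^sup>2 * \<eta> (l - 1)
            * (\<Sum>s=l..k. (\<eta> s)^3)
            / ((\<Sum>s=l..k. \<eta> s) * (\<Sum>s=l-1..k. \<eta> s))
            * bregman (avg_fun n f) (avg_grad n g) (x l) xs))"
proof -
  have k1: "1 \<le> k" and kK: "k \<le> K" using k_range by auto
  have nm: "\<And>x. \<psi> x \<noteq> -\<infinity>" using psi_proper unfolding proper_fun_def by blast
  define SL where "SL = (\<Sum>i=1..n. L i)"
  define S where "S t = (\<Sum>s=t..k. \<eta> s)" for t
  define z where "z = zseq S \<eta> x xs"
  define p where "p v = real_of_ereal (\<psi> v)" for v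
  define F where "F v = avg_fun n f v + p v" for v
  define B where "B v = bregman (avg_fun n f) (avg_grad n g) v xs" for v
  define A where "A t = (\<Sum>i=1..n. L (\<sigma> t i) * (norm (\<Sum>j=1..i-1. g (\<sigma> t j) xs))^2)" for t
  define e where "e t = 8 * \<eta> t ^3 * A t + 16 * \<eta> t^3 * SL^2 * real n * B (z t)" for t
  have etak: "\<eta> t > 0" if "t \<in> {1..k}" for t using eta_pos that kK by auto
  have SLpos: "SL > 0" unfolding SL_def using L_pos n_pos by (intro sum_pos) auto
  have stepc: "2 * \<eta> t * SL \<le> 1" if t: "t \<in> {1..k}" for t
  proof -
    define Lb where "Lb = SL / real n"
    define M where "M = Max (L ` {1..n})"
    have Lbpos: "Lb > 0" using SLpos n_pos by (simp add: Lb_def)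
    have LM: "L i \<le> M" if "i \<in> {1..n}" for i unfolding M_def using that by (intro Max_ge) auto
    have "SL \<le> (\<Sum>i=1..n. M)" unfolding SL_def by (rule sum_mono) (rule LM)
    hence "SL \<le> real n * M" by simp
    hence LbM: "Lb \<le> M" using n_pos by (simp add: Lb_def field_simps)
    have "Lb = sqrt (Lb * Lb)" using Lbpos by simp
    also have "\<dots> \<le> sqrt (Lb * M)" using LbM Lbpos by (intro real_sqrt_le_mono mult_left_mono) auto
    finally have sq: "Lb \<le> sqrt (Lb * M)" .
    have "\<eta> t \<le> 1 / (2 * real n * sqrt (Lb * M))"
      using eta_le[of t] t kK unfolding Lb_def M_def SL_def by auto
    also have "\<dots> \<le> 1 / (2 * real n * Lb)"
      using sq Lbpos n_pos LbM by (intro divide_left_mono mult_left_mono mult_pos_pos) auto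
    also have "\<dots> = 1 / (2 * SL)" using n_pos by (simp add: Lb_def)
    finally show ?thesis using SLpos by (simp add: field_simps)
  qed
  have Spos: "S t > 0" if "t \<in> {1..k}" for t
    unfolding S_def using that etak by (intro sum_pos) auto
  have Sk1: "S (Suc k) = 0" unfolding S_def by simp
  have Ssplit: "S t = \<eta> t + S (Suc t)" if "t \<le> k" for t
    unfolding S_def using that by (simp add: sum.atLeast_Suc_atMost)
  have Snn: "S t \<ge> 0" if "1 \<le> t" for t
    unfolding S_def using that etak by (intro sum_nonneg) (auto intro: less_imp_le)
  have xfin: "\<psi> (x t) < \<infinity>" if "t \<in> {1..Suc k}" for t
  proof (cases t)
    case 0 thus ?thesis using that by simp
  next
    case (Suc t')
    show ?thesis
    proof (cases "t' = 0")
      case True thus ?thesis using Suc x1_dom by simp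
    next
      case False
      hence "t' \<in> {1..K}" using Suc that kK by auto
      thus ?thesis using prox_fin[OF step[of t'] n_pos xs_fin nm] Suc by simp
    qed
  qed
  define r where "r t = S (Suc t) / S t" for t
  have r01: "0 \<le> r t" "r t \<le> 1" if "t \<in> {1..k}" for t
    using Spos[OF that] Snn[of "Suc t"] Ssplit[of t] etak[OF that] that unfolding r_def by auto
  have zrec: "z (Suc t) = r t *\<^sub>R z t + (1 - r t) *\<^sub>R x (Suc t)" if t: "t \<in> {1..k}" for t
  proof -
    have "\<eta> t / S t = 1 - r t" using Spos[OF t] Ssplit[of t] t unfolding r_def by (simp add: field_simps)
    thus ?thesis using t unfolding z_def r_def by simp
  qed
  have z1: "z 1 = xs" unfolding z_def by simp
  have zfin: "\<psi> (z t) < \<infinity>" if "1 \<le> t" "t \<le> Suc k" for t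
    using that
  proof (induction t)
    case 0 thus ?case by simp
  next
    case (Suc t)
    show ?case
    proof (cases "t = 0")
      case True thus ?thesis using z1 xs_fin by simp
    next
      case False
      hence t: "t \<in> {1..k}" using Suc by auto
      show ?thesis unfolding zrec[OF t]
        by (rule comb_props(1)[OF psi_convex nm _ _ r01[OF t]]) (use Suc t xfin in auto)
    qed
  qed
  have zlast: "z (Suc k) = x (Suc k)" using zrec[of k] k1 Sk1 unfolding r_def by simp
  have Fconv: "F (z (Suc t)) \<le> r t * F (z t) + (1 - r t) * F (x (Suc t))" if t: "t \<in> {1..k}" for t
  proof -
    have 1: "p (z (Suc t)) \<le> r t * p (z t) + (1 - r t) * p (x (Suc t))"
      unfolding zrec[OF t] p_def
      by (rule comb_props(2)[OF psi_convex nm _ _ r01[OF t]]) (use t xfin zfin in auto)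
    have 2: "avg_fun n f (z (Suc t)) \<le> r t * avg_fun n f (z t) + (1 - r t) * avg_fun n f (x (Suc t))"
      unfolding zrec[OF t] by (rule avg_conv[OF f_convex r01[OF t]])
    show ?thesis using 1 2 unfolding F_def by (simp add: algebra_simps)
  qed
  have Bconv: "B (z (Suc t)) \<le> r t * B (z t) + (1 - r t) * B (x (Suc t))" if t: "t \<in> {1..k}" for t
    unfolding zrec[OF t] B_def by (rule breg_conv[OF f_convex r01[OF t]])
  define c where "c l = \<eta> (l - 1) / (S (l - 1) * S l)" for l
  have Bbound: "B (z t) \<le> S t * (\<Sum>l=2..t. c l * B (x l))" if "1 \<le> t" "t \<le> k" for t
    using that
  proof (induction t)
    case 0 thus ?case by simp
  next
    case (Suc t)
    show ?case
    proof (cases "t = 0")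
      case True thus ?thesis using z1 by (simp add: B_def bregman_def)
    next
      case False
      hence t: "t \<in> {1..k}" using Suc by auto
      have IH: "B (z t) \<le> S t * (\<Sum>l=2..t. c l * B (x l))" using Suc t by auto
      have SSp: "S (Suc t) > 0" using Spos[of "Suc t"] Suc by auto
      have "B (z (Suc t)) \<le> r t * B (z t) + (1 - r t) * B (x (Suc t))" by (rule Bconv[OF t])
      also have "\<dots> \<le> r t * (S t * (\<Sum>l=2..t. c l * B (x l))) + (1 - r t) * B (x (Suc t))"
        using IH r01[OF t] by (simp add: mult_left_mono)
      also have "\<dots> = S (Suc t) * (\<Sum>l=2..Suc t. c l * B (x l))"
      proof -
        define X where "X = (\<Sum>l=2..t. c l * B (x l))"
        have h1: "r t * S t = S (Suc t)" using Spos[OF t] unfolding r_def by simp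
        have h2: "1 - r t = S (Suc t) * c (Suc t)"
        proof -
          have "1 - r t = \<eta> t / S t" using Spos[OF t] Ssplit[of t] t unfolding r_def by (simp add: field_simps)
          moreover have "S (Suc t) * c (Suc t) = \<eta> t / S t" using SSp unfolding c_def by simp
          ultimately show ?thesis by simp
        qed
        have h3: "(\<Sum>l=2..Suc t. c l * B (x l)) = X + c (Suc t) * B (x (Suc t))"
          unfolding X_def using t by (subst sum.cl_ivl_Suc) auto
        have "r t * (S t * X) + (1 - r t) * B (x (Suc t)) = (r t * S t) * X + (1 - r t) * B (x (Suc t))"
          by (simp add: mult.assoc)
        also have "\<dots> = S (Suc t) * X + (S (Suc t) * c (Suc t)) * B (x (Suc t))" unfolding h1 h2 ..
        also have "\<dots> = S (Suc t) * (X + c (Suc t) * B (x (Suc t)))" by (simp add: algebra_simps)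
        finally show ?thesis unfolding h3 X_def .
      qed
      finally show ?thesis .
    qed
  qed
  define W where "W t = (norm (x t - z t))^2 / S t + 2 * real n * F (z t)" for t
  have Wstep: "W (Suc t) \<le> W t + e t / S t" if t: "t \<in> {1..k}" for t
  proof -
    have tK: "t \<in> {1..K}" using t kK by auto
    have ep: "(norm (x (Suc t) - z t))^2 \<le> (norm (x t - z t))^2
     - 2 * real n * \<eta> t * ((avg_fun n f (x (Suc t)) + real_of_ereal (\<psi> (x (Suc t)))) - (avg_fun n f (z t) + real_of_ereal (\<psi> (z t))))
     + 8 * \<eta> t^3 * (\<Sum>i=1..n. L (\<sigma> t i) * (norm (\<Sum>j=1..i-1. g (\<sigma> t j) xs))^2)
     + 16 * \<eta> t^3 * (\<Sum>i=1..n. L i)^2 * real n * bregman (avg_fun n f) (avg_grad n g) (z t) xs"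
      by (rule epoch[OF n_pos f_convex f_grad L_pos f_smooth perm[OF tK] eta_pos[OF tK] _ psi_convex nm step[OF tK]])
         (use stepc[OF t] zfin[of t] t in \<open>auto simp: SL_def\<close>)
    hence ep': "(norm (x (Suc t) - z t))^2 \<le> (norm (x t - z t))^2 - 2 * real n * \<eta> t * (F (x (Suc t)) - F (z t)) + e t"
      unfolding F_def p_def e_def A_def B_def SL_def by simp
    define X where "X = (norm (x (Suc t) - z t))^2"
    have Xnn: "X \<ge> 0" unfolding X_def by simp
    have St: "S t > 0" using Spos[OF t] .
    have eta_eq: "\<eta> t = (1 - r t) * S t" using St Ssplit[of t] t unfolding r_def by (simp add: field_simps)
    have diff: "x (Suc t) - z (Suc t) = r t *\<^sub>R (x (Suc t) - z t)"
      unfolding zrec[OF t] by (simp add: algebra_simps)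
    have n1: "(norm (x (Suc t) - z (Suc t)))^2 / S (Suc t) \<le> X / S t"
    proof (cases "S (Suc t) = 0")
      case True thus ?thesis using Xnn St by simp
    next
      case False
      hence SSp: "S (Suc t) > 0" using Snn[of "Suc t"] by simp
      have nr: "(norm (x (Suc t) - z (Suc t)))^2 = (r t)^2 * X"
        unfolding diff X_def by (simp add: power_mult_distrib)
      have "(norm (x (Suc t) - z (Suc t)))^2 / S (Suc t) = (S (Suc t) / S t) * (X / S t)"
        unfolding nr r_def using SSp St by (simp add: power2_eq_square field_simps)
      also have "\<dots> \<le> 1 * (X / S t)"
        using r01[OF t] Xnn St unfolding r_def by (intro mult_right_mono) auto
      finally show ?thesis by simp
    qed
    have "W (Suc t) \<le> X / S t + 2 * real n * (r t * F (z t) + (1 - r t) * F (x (Suc t)))"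
    proof -
      have "2 * real n * F (z (Suc t)) \<le> 2 * real n * (r t * F (z t) + (1 - r t) * F (x (Suc t)))"
        using Fconv[OF t] by (intro mult_left_mono) auto
      thus ?thesis unfolding W_def using n1 by linarith
    qed
    also have "X / S t \<le> ((norm (x t - z t))^2 - 2 * real n * \<eta> t * (F (x (Suc t)) - F (z t)) + e t) / S t"
      using ep' St unfolding X_def by (simp add: divide_right_mono)
    also have "((norm (x t - z t))^2 - 2 * real n * \<eta> t * (F (x (Suc t)) - F (z t)) + e t) / S t
       = (norm (x t - z t))^2 / S t - 2 * real n * (1 - r t) * (F (x (Suc t)) - F (z t)) + e t / S t"
      unfolding eta_eq using St by (simp add: field_simps)
    finally show ?thesis unfolding W_def by (simp add: algebra_simps)
  qed
  have Wsum: "W (Suc m) \<le> W 1 + (\<Sum>t=1..m. e t / S t)" if "1 \<le> m" "m \<le> k" for m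
    using that
  proof (induction m)
    case 0 thus ?case by simp
  next
    case (Suc m)
    show ?case
    proof (cases "m = 0")
      case True thus ?thesis using Wstep[of 1] k1 by simp
    next
      case False
      hence "W (Suc m) \<le> W 1 + (\<Sum>t=1..m. e t / S t)" using Suc by auto
      moreover have "W (Suc (Suc m)) \<le> W (Suc m) + e (Suc m) / S (Suc m)" using Wstep[of "Suc m"] Suc by auto
      ultimately show ?thesis by (simp add: sum.cl_ivl_Suc)
    qed
  qed
  have final: "2 * real n * (F (x (Suc k)) - F xs) \<le> (norm (x 1 - xs))^2 / S 1 + (\<Sum>t=1..k. e t / S t)"
    using Wsum[OF k1 order.refl] unfolding W_def zlast z1 Sk1 by (simp add: algebra_simps)
  have npos: "real n > 0" using n_pos by simp
  have eb: "e t / S t \<le> 8 * \<eta> t^3 * A t / S t + 16 * SL^2 * real n * (\<Sum>l=2..t. \<eta> t^3 * (c l * B (x l)))"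
    if t: "t \<in> {1..k}" for t
  proof -
    have St: "S t > 0" using Spos[OF t] .
    have "B (z t) / S t \<le> (\<Sum>l=2..t. c l * B (x l))"
      using Bbound[of t] t St by (simp add: divide_le_eq mult.commute)
    hence "16 * SL^2 * real n * \<eta> t^3 * (B (z t) / S t) \<le> 16 * SL^2 * real n * \<eta> t^3 * (\<Sum>l=2..t. c l * B (x l))"
      using etak[OF t] by (intro mult_left_mono) auto
    moreover have "e t / S t = 8 * \<eta> t^3 * A t / S t + 16 * SL^2 * real n * \<eta> t^3 * (B (z t) / S t)"
      unfolding e_def by (simp add: add_divide_distrib)
    moreover have "16 * SL^2 * real n * \<eta> t^3 * (\<Sum>l=2..t. c l * B (x l)) = 16 * SL^2 * real n * (\<Sum>l=2..t. \<eta> t^3 * (c l * B (x l)))"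
      by (simp add: sum_distrib_left mult.assoc)
    ultimately show ?thesis by linarith
  qed
  have sumA: "(\<Sum>t=1..k. e t / S t) \<le> (\<Sum>t=1..k. 8 * \<eta> t^3 * A t / S t) + 16 * SL^2 * real n * (\<Sum>l=2..k. c l * (\<Sum>s=l..k. \<eta> s^3) * B (x l))"
  proof -
    have "(\<Sum>t=1..k. e t / S t) \<le> (\<Sum>t=1..k. 8 * \<eta> t^3 * A t / S t + 16 * SL^2 * real n * (\<Sum>l=2..t. \<eta> t^3 * (c l * B (x l))))"
      by (rule sum_mono) (rule eb)
    also have "\<dots> = (\<Sum>t=1..k. 8 * \<eta> t^3 * A t / S t) + 16 * SL^2 * real n * (\<Sum>t=1..k. \<Sum>l=2..t. \<eta> t^3 * (c l * B (x l)))"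
      by (simp add: sum.distrib sum_distrib_left)
    also have "(\<Sum>t=1..k. \<Sum>l=2..t. \<eta> t^3 * (c l * B (x l))) = (\<Sum>l=2..k. \<Sum>t=l..k. \<eta> t^3 * (c l * B (x l)))"
      by (rule sum_exchange)
    also have "\<dots> = (\<Sum>l=2..k. c l * (\<Sum>s=l..k. \<eta> s^3) * B (x l))"
      by (rule sum.cong) (simp_all add: sum_distrib_right sum_distrib_left algebra_simps)
    finally show ?thesis .
  qed
  define T1 where "T1 = (norm (xs - x 1))\<^sup>2 / (2 * real n * (\<Sum>l=1..k. \<eta> l))"
  define T2 where "T2 = (\<Sum>l=1..k. 4 * (\<eta> l)^3 *
            (\<Sum>i=2..n. L (\<sigma> l i) / real n * (norm (\<Sum>j=1..i-1. g (\<sigma> l j) xs))\<^sup>2)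
            / (\<Sum>s=l..k. \<eta> s))"
  define T3 where "T3 = (\<Sum>l=2..k. 8 * (real n)\<^sup>2 * ((\<Sum>i=1..n. L i) / real n)\<^sup>2 * \<eta> (l - 1)
            * (\<Sum>s=l..k. (\<eta> s)^3)
            / ((\<Sum>s=l..k. \<eta> s) * (\<Sum>s=l-1..k. \<eta> s))
            * bregman (avg_fun n f) (avg_grad n g) (x l) xs)"
  have eT1: "(norm (x 1 - xs))^2 / S 1 = 2 * real n * T1"
    unfolding T1_def S_def using npos by (simp add: norm_minus_commute)
  have eT2: "(\<Sum>t=1..k. 8 * \<eta> t^3 * A t / S t) = 2 * real n * T2"
  proof -
    have Ai: "A t = real n * (\<Sum>i=2..n. L (\<sigma> t i) / real n * (norm (\<Sum>j=1..i-1. g (\<sigma> t j) xs))\<^sup>2)" for t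
    proof -
      have "A t = (\<Sum>i=2..n. L (\<sigma> t i) * (norm (\<Sum>j=1..i-1. g (\<sigma> t j) xs))^2)"
        unfolding A_def using n_pos by (simp add: sum.atLeast_Suc_atMost numeral_2_eq_2)
      thus ?thesis using npos by (simp add: sum_distrib_left)
    qed
    show ?thesis unfolding T2_def Ai S_def using npos by (simp add: sum_distrib_left algebra_simps)
  qed
  have eT3: "16 * SL^2 * real n * (\<Sum>l=2..k. c l * (\<Sum>s=l..k. \<eta> s^3) * B (x l)) = 2 * real n * T3"
  proof -
    define Q where "Q l = (\<Sum>s=l..k. \<eta> s^3)" for l
    have T3': "T3 = (\<Sum>l=2..k. 8 * (real n)\<^sup>2 * (SL / real n)\<^sup>2 * \<eta> (l - 1) * Q l / (S l * S (l - 1)) * B (x l))"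
      unfolding T3_def S_def SL_def B_def Q_def by simp
    have tw: "16 * SL^2 * real n * (c l * Q l * B (x l)) = 2 * real n * (8 * (real n)\<^sup>2 * (SL / real n)\<^sup>2 * \<eta> (l - 1) * Q l / (S l * S (l - 1)) * B (x l))" for l
      unfolding c_def using npos by (simp add: power2_eq_square field_simps)
    show ?thesis unfolding T3' Q_def[symmetric] sum_distrib_left tw ..
  qed
  have "2 * real n * (F (x (Suc k)) - F xs) \<le> 2 * real n * (T1 + T2 + T3)"
  proof -
    have "2 * real n * (F (x (Suc k)) - F xs) \<le> 2 * real n * T1 + 2 * real n * T2 + 2 * real n * T3"
      using final sumA unfolding eT1 eT2 eT3 by linarith
    thus ?thesis by (simp add: distrib_left)
  qed
  hence real_bound: "F (x (Suc k)) - F xs \<le> T1 + T2 + T3" using npos by simp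
  have psi1: "\<psi> (x (Suc k)) = ereal (p (x (Suc k)))"
    using xfin[of "Suc k"] nm[of "x (Suc k)"] unfolding p_def by (cases "\<psi> (x (Suc k))") auto
  have psi2: "\<psi> xs = ereal (p xs)"
    using xs_fin nm[of xs] unfolding p_def by (cases "\<psi> xs") auto
  have lhs: "ereal (avg_fun n f (x (Suc k))) + \<psi> (x (Suc k)) - (ereal (avg_fun n f xs) + \<psi> xs)
      = ereal (F (x (Suc k)) - F xs)"
    unfolding psi1 psi2 F_def by simp
  have "ereal (avg_fun n f (x (Suc k))) + \<psi> (x (Suc k)) - (ereal (avg_fun n f xs) + \<psi> xs)
      \<le> ereal (T1 + T2 + T3)"
    unfolding lhs using real_bound by simp
  thus ?thesis unfolding T1_def T2_def T3_def .
qed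


end
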